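(* Let $k\ge 4$ be an integer and let $f_k(X)=X^k-X^{k-1}-\cdots-X-1$. Let $\alpha_k$ denote the unique root of $f_k$ with $|\alpha_k|>1$ (it is real and greater than $1$), and let $\rho_1>\rho_2>\cdots>\rho_K$ be the distinct absolute values of the remaining roots of $f_k$ (all of which lie inside the unit disk). Then $$\frac{\rho_i}{\rho_j}>1+\frac{1}{10\,k^{9.6}\,(\pi/e)^k}\qquad\text{for all }1\le i<j\le K.$$
   Context: $f_k(X)=X^k-X^{k-1}-\cdots-X-1$ is the characteristic polynomial of the $k$-generalized Fibonacci sequence. It has exactly one root outside the closed unit disk, which is real and larger than $1$; all other roots have absolute value less than $1$. *)

theory Defs
  imports "HOL-Analysis.Analysis" "HOL-Computational_Algebra.Polynomial"
begin

definition fib_poly :: "nat \<Rightarrow> complex poly" where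
  "fib_poly k = monom 1 k - (\<Sum>j<k. monom 1 j)"

text \<open>The distinct absolute values of the roots of f_k lying inside the unit disk
  (i.e. all roots other than the dominant root alpha_k).\<close>
definition small_root_moduli :: "nat \<Rightarrow> real set" where
  "small_root_moduli k = {cmod z | z. poly (fib_poly k) z = 0 \<and> cmod z < 1}"

end

theory Submission
  imports Defs
begin

lemma poly_fib: "poly (fib_poly k) x = x ^ k - (\<Sum>j<k. x ^ j)"
  by (simp add: fib_poly_def poly_monom poly_sum)

lemma root_g:
  assumes "poly (fib_poly k) x = 0"
  shows "x ^ k * (x - 2) = -1"
proof -
  have s: "x ^ k = (\<Sum>j<k. x ^ j)" using assms by (simp add: poly_fib)
  have "x ^ k - 1 = (x - 1) * (\<Sum>j<k. x ^ j)" by (rule power_diff_1_eq)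
  hence "x ^ k - 1 = (x - 1) * x ^ k" using s by simp
  thus ?thesis by (simp add: algebra_simps)
qed

lemma root_cnj:
  assumes "poly (fib_poly k) x = 0"
  shows "poly (fib_poly k) (cnj x) = 0"
proof -
  have "cnj (poly (fib_poly k) x) = poly (fib_poly k) (cnj x)"
    by (simp add: poly_fib)
  thus ?thesis using assms by simp
qed

fun tsum :: "complex \<Rightarrow> complex \<Rightarrow> nat \<Rightarrow> complex" where
  "tsum z w 0 = 0"
| "tsum z w (Suc n) = w ^ n + z * tsum z w n"

lemma pow_diff: "z ^ n - w ^ n = (z - w) * tsum z w n"
proof (induction n)
  case 0 then show ?case by simp
next
  case (Suc n)
  have "z ^ Suc n - w ^ Suc n = z * (z ^ n - w ^ n) + (z - w) * w ^ n" by (simp add: algebra_simps)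
  also have "\<dots> = (z - w) * tsum z w (Suc n)" by (subst Suc.IH) (simp add: algebra_simps)
  finally show ?case .
qed

lemma pow_lip:
  assumes "cmod z \<le> 1" "cmod w \<le> 1"
  shows "cmod (w ^ n - z ^ n) \<le> real n * cmod (w - z)"
proof (induction n)
  case 0 then show ?case by simp
next
  case (Suc n)
  have e: "w ^ Suc n - z ^ Suc n = w * (w ^ n - z ^ n) + (w - z) * z ^ n"
    by (simp add: algebra_simps)
  have "cmod (w * (w ^ n - z ^ n)) \<le> cmod (w ^ n - z ^ n)"
    using assms by (simp add: norm_mult mult_left_le_one_le)
  moreover have "cmod ((w - z) * z ^ n) \<le> cmod (w - z)"
    using assms by (simp add: norm_mult norm_power mult_left_le power_le_one)
  ultimately show ?case using Suc e norm_triangle_ineq[of "w * (w ^ n - z ^ n)" "(w - z) * z ^ n"]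
    by (simp add: distrib_right)
qed

lemma tsum_approx:
  assumes "cmod z \<le> 1" "cmod w \<le> 1"
  shows "cmod (tsum z w (Suc n) - of_nat (Suc n) * z ^ n) \<le> real (Suc n) ^ 2 / 2 * cmod (w - z)"
proof (induction n)
  case 0 then show ?case by simp
next
  case (Suc n)
  let ?D = "tsum z w (Suc n) - of_nat (Suc n) * z ^ n"
  have e: "tsum z w (Suc (Suc n)) - of_nat (Suc (Suc n)) * z ^ Suc n = (w ^ Suc n - z ^ Suc n) + z * ?D"
    by (simp add: algebra_simps)
  have a: "cmod (w ^ Suc n - z ^ Suc n) \<le> real (Suc n) * cmod (w - z)"
    by (rule pow_lip[OF assms])
  have b: "cmod (z * ?D) \<le> cmod ?D"
    using assms by (simp add: norm_mult mult_left_le_one_le)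
  have "cmod (tsum z w (Suc (Suc n)) - of_nat (Suc (Suc n)) * z ^ Suc n)
      \<le> real (Suc n) * cmod (w - z) + real (Suc n) ^ 2 / 2 * cmod (w - z)"
    unfolding e using norm_triangle_ineq[of "w ^ Suc n - z ^ Suc n" "z * ?D"] a b Suc by linarith
  also have "\<dots> = (real (Suc n) + real (Suc n) ^ 2 / 2) * cmod (w - z)"
    by (simp add: distrib_right)
  also have "\<dots> \<le> real (Suc (Suc n)) ^ 2 / 2 * cmod (w - z)"
  proof (rule mult_right_mono)
    show "real (Suc n) + real (Suc n) ^ 2 / 2 \<le> real (Suc (Suc n)) ^ 2 / 2"
      by (simp add: power2_eq_square field_simps)
  qed simp
  finally show ?case .
qed

lemma separation:
  assumes k: "k \<ge> 4" and gz: "z ^ k * (z - 2) = -1" and gw: "w ^ k * (w - 2) = -1"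
    and ne: "z \<noteq> w" and z1: "cmod z \<le> 1" and w1: "cmod w \<le> 1"
    and zk: "cmod z ^ k \<ge> 1/3"
  shows "cmod (z - w) \<ge> 1 / (8 * real k)"
proof -
  obtain m where km: "k = Suc m" using k by (cases k) auto
  let ?d = "cmod (w - z)"
  have gz': "z ^ Suc k - 2 * z ^ k = -1" using gz by (simp add: algebra_simps)
  have gw': "w ^ Suc k - 2 * w ^ k = -1" using gw by (simp add: algebra_simps)
  have "z ^ Suc k - w ^ Suc k - 2 * (z ^ k - w ^ k) = (z ^ Suc k - 2 * z ^ k) - (w ^ Suc k - 2 * w ^ k)"
    by (simp add: algebra_simps)
  hence "z ^ Suc k - w ^ Suc k - 2 * (z ^ k - w ^ k) = 0" by (simp only: gz' gw') simp
  moreover have "(z - w) * (tsum z w (Suc k) - 2 * tsum z w k) = (z - w) * tsum z w (Suc k) - 2 * ((z - w) * tsum z w k)"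
    by (simp add: algebra_simps)
  ultimately have "(z - w) * (tsum z w (Suc k) - 2 * tsum z w k) = 0"
    by (simp only: pow_diff[symmetric])
  hence Q: "tsum z w (Suc k) - 2 * tsum z w k = 0" using ne by simp
  define Q0 where "Q0 = of_nat (Suc k) * z ^ k - 2 * (of_nat k * z ^ m)"
  have a1: "cmod (tsum z w (Suc k) - of_nat (Suc k) * z ^ k) \<le> real (Suc k) ^ 2 / 2 * ?d"
    by (rule tsum_approx[OF z1 w1])
  have a2: "cmod (tsum z w k - of_nat k * z ^ m) \<le> real k ^ 2 / 2 * ?d"
    using tsum_approx[OF z1 w1, of m] km by simp
  have "Q0 = (of_nat (Suc k) * z ^ k - tsum z w (Suc k)) + 2 * (tsum z w k - of_nat k * z ^ m)"
    using Q unfolding Q0_def by (simp add: algebra_simps)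
  hence "cmod Q0 \<le> cmod (of_nat (Suc k) * z ^ k - tsum z w (Suc k)) + 2 * cmod (tsum z w k - of_nat k * z ^ m)"
    by (metis norm_triangle_ineq norm_mult norm_numeral)
  also have "\<dots> \<le> real (Suc k) ^ 2 / 2 * ?d + 2 * (real k ^ 2 / 2 * ?d)"
    using a1 a2 by (simp add: norm_minus_commute)
  finally have up: "cmod Q0 \<le> (real (Suc k) ^ 2 / 2 + real k ^ 2) * ?d"
    by (simp add: algebra_simps)
  have "Q0 = z ^ m * (of_nat (Suc k) * z - 2 * of_nat k)"
    unfolding Q0_def km by (simp add: algebra_simps)
  hence nQ0: "cmod Q0 = cmod z ^ m * cmod (of_nat (Suc k) * z - 2 * of_nat k)"
    by (simp add: norm_mult norm_power)
  have "cmod (2 * of_nat k :: complex) \<le> cmod (of_nat (Suc k) * z - 2 * of_nat k) + cmod (of_nat (Suc k) * z :: complex)"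
    by (metis norm_minus_commute norm_triangle_ineq2 add.commute diff_le_eq)
  hence "2 * real k \<le> cmod (of_nat (Suc k) * z - 2 * of_nat k) + real (Suc k) * cmod z"
    by (simp only: norm_mult norm_of_nat norm_numeral)
  moreover have "real (Suc k) * cmod z \<le> real (Suc k)"
    using z1 by (simp add: mult_left_le del: of_nat_Suc)
  ultimately have b: "cmod (of_nat (Suc k) * z - 2 * of_nat k) \<ge> real k - 1" by linarith
  have "cmod z ^ k \<le> cmod z ^ m"
    unfolding km using z1 by (simp add: mult_left_le_one_le)
  hence "1/3 \<le> cmod z ^ m" using zk by linarith
  hence "1/3 * (real k - 1) \<le> cmod z ^ m * cmod (of_nat (Suc k) * z - 2 * of_nat k)"
    using b k by (intro mult_mono) auto
  hence lo: "(real k - 1) / 3 \<le> (real (Suc k) ^ 2 / 2 + real k ^ 2) * ?d"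
    using up nQ0 by linarith
  have kk: "real k \<ge> 4" using k by simp
  have h1: "1 / (8 * real k) * (real (Suc k) ^ 2 / 2 + real k ^ 2) \<le> (real k - 1) / 3"
  proof -
    have h: "real k * 28 \<le> real k * (real k * 7)" using kk by (intro mult_left_mono) auto
    show ?thesis using kk apply (simp add: field_simps power2_eq_square) using h by linarith
  qed
  have "1 / (8 * real k) * (real (Suc k) ^ 2 / 2 + real k ^ 2) \<le> ?d * (real (Suc k) ^ 2 / 2 + real k ^ 2)"
    using h1 lo mult.commute[of ?d "real (Suc k) ^ 2 / 2 + real k ^ 2"] by linarith
  hence "1 / (8 * real k) \<le> ?d"
    by (rule mult_right_le_imp_le) (simp add: add_pos_nonneg)
  thus ?thesis by (simp add: norm_minus_commute)
qed

lemma root_facts: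
  assumes g: "x ^ k * (x - 2) = -1" and x1: "cmod x < 1"
  shows "cmod x ^ k \<ge> 1/3" "(cmod x ^ k)^2 * (cmod x ^ 2 - 4 * Re x + 4) = 1"
proof -
  have n: "cmod x ^ k * cmod (x - 2) = 1"
    using arg_cong[OF g, of cmod] by (simp add: norm_mult norm_power)
  have "cmod (x - 2) \<le> cmod x + 2"
    using norm_triangle_ineq4[of x 2] by simp
  hence c3: "cmod (x - 2) \<le> 3" using x1 by simp
  have "1 \<le> cmod x ^ k * 3"
    using n mult_left_mono[OF c3, of "cmod x ^ k"] by simp
  thus "cmod x ^ k \<ge> 1/3" by simp
  have "cmod (x - 2) ^ 2 = cmod x ^ 2 - 4 * Re x + 4"
    by (simp only: cmod_power2) (simp add: power2_eq_square algebra_simps)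
  moreover have "(cmod x ^ k)^2 * cmod (x - 2) ^ 2 = 1"
    using n by (metis power_mult_distrib power_one)
  ultimately show "(cmod x ^ k)^2 * (cmod x ^ 2 - 4 * Re x + 4) = 1" by simp
qed

lemma real_pow_lip:
  fixes r s :: real
  assumes "0 \<le> s" "s \<le> r" "r \<le> 1"
  shows "r ^ n - s ^ n \<le> real n * (r - s)"
proof -
  have "cmod (complex_of_real r ^ n - complex_of_real s ^ n) \<le> real n * cmod (complex_of_real r - complex_of_real s)"
    by (rule pow_lip) (use assms in auto)
  hence "\<bar>r ^ n - s ^ n\<bar> \<le> real n * \<bar>r - s\<bar>"
    by (metis norm_of_real of_real_diff of_real_power)
  thus ?thesis using assms by simp
qed

lemma sqdiff_aux: fixes p q :: real assumes "p * q \<ge> 0" "q^2 \<le> p^2" shows "(p - q)^2 \<le> p^2 - q^2"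
proof -
  have "\<bar>q\<bar> \<le> \<bar>p\<bar>" using assms(2) by (simp add: abs_le_square_iff)
  hence "\<bar>q\<bar> * \<bar>q\<bar> \<le> \<bar>p\<bar> * \<bar>q\<bar>" by (rule mult_right_mono) simp_all
  moreover have "\<bar>p\<bar> * \<bar>q\<bar> = p * q" using assms(1) by (simp add: abs_mult[symmetric])
  ultimately have "q * q \<le> p * q" by simp
  thus ?thesis by (simp add: power2_eq_square algebra_simps)
qed
lemma sqdiff: fixes p q :: real assumes "p * q \<ge> 0" shows "(p - q)^2 \<le> \<bar>p^2 - q^2\<bar>"
proof (cases "q^2 \<le> p^2")
  case True thus ?thesis using sqdiff_aux[OF assms True] by simp
next
  case False
  have "(q - p)^2 \<le> q^2 - p^2" using sqdiff_aux[of q p] assms False by (simp add: mult.commute)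
  thus ?thesis using False by (simp add: power2_commute)
qed

lemma re_formula:
  assumes "x ^ k * (x - 2) = -1" "cmod x < 1"
  shows "Re x = (cmod x ^ 2 + 4 - 1 / (cmod x ^ k)^2) / 4"
proof -
  have A: "cmod x ^ k \<ge> 1/3" and e: "(cmod x ^ k)^2 * (cmod x ^ 2 - 4 * Re x + 4) = 1"
    using root_facts[OF assms] by auto
  have "cmod x ^ k > 0" using A by linarith
  hence "(cmod x ^ k)^2 > 0" by (rule zero_less_power)
  hence "cmod x ^ 2 - 4 * Re x + 4 = 1 / (cmod x ^ k)^2" using e by (simp add: field_simps)
  thus ?thesis by simp
qed

lemma core:
  assumes k: "k \<ge> 4" and gz: "z ^ k * (z - 2) = -1" and gw: "w ^ k * (w - 2) = -1"
    and z1: "cmod z < 1" and w1: "cmod w < 1" and lt: "cmod w < cmod z"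
    and ims: "Im z * Im w \<ge> 0"
    and del: "cmod z - cmod w \<le> 1 / (10 * real k ^ 9)"
  shows False
proof -
  define r where "r = cmod z"
  define s where "s = cmod w"
  define A where "A = r ^ k"
  define C where "C = s ^ k"
  define \<delta> where "\<delta> = r - s"
  define t where "t = real k * \<delta>"
  have kk: "real k \<ge> 4" using k by simp
  have s0: "0 \<le> s" "s < r" "r < 1" using lt z1 unfolding r_def s_def by auto
  have d0: "\<delta> > 0" unfolding \<delta>_def using s0 by simp
  have A3: "A \<ge> 1/3" unfolding A_def r_def using root_facts[OF gz z1] by simp
  have C3: "C \<ge> 1/3" unfolding C_def s_def using root_facts[OF gw w1] by simp
  have CA: "C \<le> A" unfolding A_def C_def using s0 by (intro power_mono) auto
  have Rez: "Re z = (r ^ 2 + 4 - 1 / A ^ 2) / 4" unfolding r_def A_def using re_formula[OF gz z1] .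
  have Rew: "Re w = (s ^ 2 + 4 - 1 / C ^ 2) / 4" unfolding s_def C_def using re_formula[OF gw w1] .
  define E where "E = 1 / C ^ 2 - 1 / A ^ 2"
  have Eeq: "E * (A^2 * C^2) = A^2 - C^2"
    unfolding E_def using A3 C3 by (simp add: field_simps)
  have A2C2: "A^2 * C^2 \<ge> 1/81"
  proof -
    have "A^2 \<ge> (1/3)^2" using A3 by (intro power_mono) auto
    moreover have "C^2 \<ge> (1/3)^2" using C3 by (intro power_mono) auto
    ultimately have "A^2 * C^2 \<ge> (1/3)^2 * (1/3)^2" by (intro mult_mono) auto
    thus ?thesis by (simp add: power2_eq_square)
  qed
  have AC: "A^2 - C^2 \<le> 2 * real k * \<delta>"
  proof -
    have "A^2 - C^2 = r ^ (2*k) - s ^ (2*k)" unfolding A_def C_def by (simp add: power_mult[symmetric] mult.commute)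
    also have "\<dots> \<le> real (2*k) * (r - s)" using s0 by (intro real_pow_lip) auto
    finally show ?thesis unfolding \<delta>_def by simp
  qed
  have E0: "E \<ge> 0" unfolding E_def using CA C3
    by (simp add: divide_simps)
  have "E \<le> 81 * (E * (A^2 * C^2))"
    using mult_left_mono[OF A2C2 E0] by linarith
  hence E1: "E \<le> 162 * t" using Eeq AC unfolding t_def by simp
  have rs2: "r^2 - s^2 = (r + s) * \<delta>" unfolding \<delta>_def by (simp add: power2_eq_square algebra_simps)
  have rs2a: "r^2 - s^2 \<ge> 0" using rs2 d0 s0 by simp
  have rs2b: "r^2 - s^2 \<le> 2 * \<delta>" using rs2 d0 s0 mult_right_mono[of "r+s" 2 \<delta>] by simp
  have dt: "\<delta> \<le> t" unfolding t_def using kk d0 mult_right_mono[of 1 "real k" \<delta>] by simp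
  define a where "a = Re z - Re w"
  have aeq: "a = ((r^2 - s^2) + E) / 4" unfolding a_def Rez Rew E_def using A3 C3 by (simp add: field_simps)
  have aabs: "\<bar>a\<bar> \<le> 41 * t" using aeq E0 E1 rs2a rs2b dt by (simp add: abs_le_iff)
  have sumre: "\<bar>Re z + Re w\<bar> \<le> 2"
    using abs_Re_le_cmod[of z] abs_Re_le_cmod[of w] z1 w1 by linarith
  have Imz: "Im z ^ 2 = r^2 - Re z ^ 2" unfolding r_def by (simp add: cmod_power2)
  have Imw: "Im w ^ 2 = s^2 - Re w ^ 2" unfolding s_def by (simp add: cmod_power2)
  have "Im z ^ 2 - Im w ^ 2 = (r^2 - s^2) - a * (Re z + Re w)"
    unfolding Imz Imw a_def by (simp add: power2_eq_square algebra_simps)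
  hence "\<bar>Im z ^ 2 - Im w ^ 2\<bar> \<le> \<bar>r^2 - s^2\<bar> + \<bar>a\<bar> * \<bar>Re z + Re w\<bar>"
    by (simp add: abs_mult[symmetric])
  also have "\<dots> \<le> 2 * \<delta> + \<bar>a\<bar> * 2"
    using rs2a rs2b by (intro add_mono mult_left_mono sumre) auto
  finally have imb: "(Im z - Im w)^2 \<le> 2 * \<delta> + \<bar>a\<bar> * 2"
    using sqdiff[OF ims] by linarith
  have "cmod (z - w) ^ 2 = a^2 + (Im z - Im w)^2"
    unfolding a_def by (simp add: cmod_power2)
  also have "a^2 \<le> (41 * t)^2"
    using aabs by (metis abs_ge_zero abs_le_square_iff abs_of_nonneg power2_abs order_trans abs_ge_self)
  finally have n2: "cmod (z - w) ^ 2 \<le> 1681 * t^2 + 84 * t"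
    using imb aabs dt by (simp add: power2_eq_square)
  have ne: "z \<noteq> w" using lt by auto
  have sep: "cmod (z - w) \<ge> 1 / (8 * real k)"
    by (rule separation[OF k gz gw ne]) (use z1 w1 root_facts[OF gz z1] in auto)
  have "(1 / (8 * real k))^2 \<le> cmod (z - w) ^ 2"
    using sep kk by (intro power_mono) auto
  hence lo: "1 \<le> 64 * real k ^ 2 * cmod (z - w) ^ 2"
    using kk by (simp add: field_simps power2_eq_square)
  have t0: "t \<ge> 0" unfolding t_def using d0 by simp
  have k6: "real k ^ 6 \<ge> 4096"
    using power_mono[OF kk, of 6] by simp
  have "t \<le> real k * (1 / (10 * real k ^ 9))"
    unfolding t_def \<delta>_def r_def s_def using del kk by (intro mult_left_mono) auto
  hence "t * (10 * real k ^ 9) \<le> real k" using kk by (simp add: field_simps)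
  moreover have "real k ^ 9 = real k * real k ^ 8" by (simp add: power_Suc[symmetric] del: power_Suc)
  ultimately have "real k * (10 * real k ^ 8 * t) \<le> real k * 1" by (simp add: algebra_simps)
  hence t1: "10 * real k ^ 8 * t \<le> 1" by (rule mult_left_le_imp_le) (use kk in simp)
  have k8: "real k ^ 8 = real k ^ 6 * real k ^ 2" by (simp add: power_add[symmetric])
  have "40960 * (real k ^ 2 * t) \<le> 10 * real k ^ 6 * (real k ^ 2 * t)"
    using k6 t0 by (intro mult_right_mono) auto
  moreover have "10 * real k ^ 6 * (real k ^ 2 * t) = 10 * real k ^ 8 * t"
    unfolding k8 by (simp only: mult_ac)
  ultimately have t2: "40960 * (real k ^ 2 * t) \<le> 1" using t1 by linarith
  have "real k ^ 8 \<ge> 1" using kk by (simp add: one_le_power)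
  hence "1 * (10 * t) \<le> real k ^ 8 * (10 * t)" using t0 by (intro mult_right_mono) auto
  moreover have "real k ^ 8 * (10 * t) = 10 * real k ^ 8 * t" by (simp only: mult_ac)
  ultimately have "t \<le> 1/10" using t1 by linarith
  hence "t * t \<le> (1/10) * t" using t0 by (intro mult_right_mono) auto
  hence "t^2 \<le> t / 10" by (simp add: power2_eq_square)
  hence n3: "cmod (z - w) ^ 2 \<le> 253 * t" using n2 t0 by linarith
  have "64 * real k ^ 2 * cmod (z - w) ^ 2 \<le> 64 * real k ^ 2 * (253 * t)"
    using n3 by (intro mult_left_mono) auto
  moreover have "64 * real k ^ 2 * (253 * t) = 16192 * (real k ^ 2 * t)" by simp
  ultimately show False using lo t2 by linarith
qed

lemma B_bound:
  assumes "k \<ge> (4::nat)"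
  shows "1 / (10 * real k powr 9.6 * (pi / exp 1) ^ k) \<le> 1 / (10 * real k ^ 9)"
proof -
  have k1: "real k \<ge> 1" using assms by simp
  have "real k ^ 9 = real k powr 9" using k1 by (simp add: powr_realpow)
  also have "\<dots> \<le> real k powr 9.6" using k1 by (intro powr_mono) auto
  finally have p: "real k ^ 9 \<le> real k powr 9.6" .
  have "exp 1 < pi" using e_less_272 pi_gt3 by linarith
  hence "pi / exp 1 \<ge> 1" by simp
  hence q: "(pi / exp 1) ^ k \<ge> 1" by (rule one_le_power)
  have "10 * real k ^ 9 * 1 \<le> 10 * real k powr 9.6 * (pi / exp 1) ^ k"
    using p q by (intro mult_mono) auto
  moreover have "0 < 10 * real k ^ 9" using k1 by simp
  ultimately show ?thesis by (intro divide_left_mono) auto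
qed

theorem theorem1:
  fixes k :: nat and \<rho>i \<rho>j :: real
  assumes "k \<ge> 4"
    and "\<rho>i \<in> small_root_moduli k" and "\<rho>j \<in> small_root_moduli k"
    and "\<rho>i > \<rho>j"
  shows "\<rho>i / \<rho>j > 1 + 1 / (10 * real k powr 9.6 * (pi / exp 1) ^ k)"
proof (rule ccontr)
  define B where "B = 1 / (10 * real k powr 9.6 * (pi / exp 1) ^ k)"
  assume "\<not> ?thesis"
  hence le: "\<rho>i / \<rho>j \<le> 1 + B" unfolding B_def by simp
  obtain z where z: "\<rho>i = cmod z" "poly (fib_poly k) z = 0" "cmod z < 1"
    using assms(2) unfolding small_root_moduli_def by auto
  obtain w where w: "\<rho>j = cmod w" "poly (fib_poly k) w = 0" "cmod w < 1"
    using assms(3) unfolding small_root_moduli_def by auto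
  define w' where "w' = (if Im z * Im w \<ge> 0 then w else cnj w)"
  have w'r: "poly (fib_poly k) w' = 0" unfolding w'_def using w root_cnj by auto
  have w'm: "cmod w' = \<rho>j" unfolding w'_def using w by auto
  have w'i: "Im z * Im w' \<ge> 0" unfolding w'_def by auto
  have gz: "z ^ k * (z - 2) = -1" using root_g z by blast
  have gw: "w' ^ k * (w' - 2) = -1" using root_g w'r by blast
  have "cmod w' ^ k \<ge> 1/3" using root_facts[OF gw] w'm w by auto
  hence j0: "\<rho>j > 0" using w'm assms(1)
    by (metis divide_pos_pos less_eq_real_def norm_ge_zero not_less_iff_gr_or_eq power_0_left
        zero_less_numeral zero_less_one le_zero_eq zero_neq_numeral)
  have B0: "B \<ge> 0" unfolding B_def by simp
  have "\<rho>i \<le> (1 + B) * \<rho>j" using le j0 by (simp add: divide_le_eq)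
  hence "\<rho>i - \<rho>j \<le> B * \<rho>j" by (simp add: algebra_simps)
  also have "\<dots> \<le> B * 1" using B0 w j0 by (intro mult_left_mono) auto
  also have "\<dots> \<le> 1 / (10 * real k ^ 9)" unfolding B_def using B_bound[OF assms(1)] by simp
  finally have d: "cmod z - cmod w' \<le> 1 / (10 * real k ^ 9)" using z w'm by simp
  show False
    by (rule core[OF assms(1) gz gw]) (use z w w'm w'i d assms(4) in auto)
qed

end
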